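(* For the $N$-relay 1-2-1 diamond network, in both the FD and HD cases, $\max_{p\in[1:N]}\mathsf C_p\ge\frac12\mathsf{C}_{\rm cs,iid}$ (with $\mathsf C_p$ and $\mathsf{C}_{\rm cs,iid}$ of the corresponding mode). Moreover the constant $\tfrac12$ is best possible in both modes: for every $\varepsilon>0$ there is a diamond network (with $N=2$) such that $\max_p\mathsf C_p\le(\tfrac12+\varepsilon)\mathsf{C}_{\rm cs,iid}$.
   Context: Diamond network: nodes $[0:N+1]$, source $0$, destination $N+1$, relays $[1:N]$; the only links are $(0,p)$ and $(p,N+1)$ for $p\in[1:N]$, with positive rational capacities $\ell_{p,0}$ and $\ell_{N+1,p}$; all other $\ell_{j,i}=0$. $\mathsf C_p=\min\{\ell_{p,0},\ell_{N+1,p}\}$ in FD and $\mathsf C_p=\frac{\ell_{p,0}\ell_{N+1,p}}{\ell_{p,0}+\ell_{N+1,p}}$ in HD. Network states: a state $s$ consists of sets $s_{i,t}\subseteq[1:N+1]\setminus\{i\}$ and $s_{i,r}\subseteq[0:N]\setminus\{i\}$, each of cardinality at most $1$, for $i\in[0:N+1]$, with $s_{0,r}=s_{N+1,t}=\emptyset$; in HD mode additionally $|s_{i,t}|+|s_{i,r}|\le1$ for $i\in[1:N]$. $\mathcal S$ is the set of all states of the mode. Link $(i,j)$ is active in $s$ if $j\in s_{i,t}$ and $i\in s_{j,r}$. $\mathsf{C}_{\rm cs,iid}=\max_{\lambda}\min_{\Omega}\sum_{i\in\Omega,\ j\in\Omega^c}\big(\sum_{s\in\mathcal S:\ (i,j)\text{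 active in }s}\lambda_s\big)\ell_{j,i}$, maximum over probability vectors $(\lambda_s)_{s\in\mathcal S}$, minimum over $\Omega$ with $0\in\Omega\subseteq[0:N]$, $\Omega^c=[0:N+1]\setminus\Omega$. *)

theory Defs
  imports Complex_Main
begin

datatype mode = FD | HD

text \<open>Diamond network with relays 1..N. a p = ell_{p,0} (source-to-relay p),
  b p = ell_{N+1,p} (relay p-to-destination). ell N a b j i is the capacity
  of the link from node i to node j (ell_{j,i} in the paper).\<close>
definition ell :: "nat \<Rightarrow> (nat \<Rightarrow> real) \<Rightarrow> (nat \<Rightarrow> real) \<Rightarrow> nat \<Rightarrow> nat \<Rightarrow> real" where
  "ell N a b j i =
     (if i = 0 \<and> 1 \<le> j \<and> j \<le> N then a j
      else if 1 \<le> i \<and> i \<le> N \<and> j = N + 1 then b i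
      else 0)"

definition valid_diamond :: "nat \<Rightarrow> (nat \<Rightarrow> real) \<Rightarrow> (nat \<Rightarrow> real) \<Rightarrow> bool" where
  "valid_diamond N a b \<longleftrightarrow> N \<ge> 1 \<and>
     (\<forall>p\<in>{1..N}. a p > 0 \<and> a p \<in> \<rat> \<and> b p > 0 \<and> b p \<in> \<rat>)"

definition Cp :: "mode \<Rightarrow> (nat \<Rightarrow> real) \<Rightarrow> (nat \<Rightarrow> real) \<Rightarrow> nat \<Rightarrow> real" where
  "Cp m a b p = (case m of
       FD \<Rightarrow> min (a p) (b p)
     | HD \<Rightarrow> a p * b p / (a p + b p))"

text \<open>A state is a pair (st, sr) with st i = s_{i,t}, sr i = s_{i,r}
  (empty outside the node set [0:N+1]).\<close>
type_synonym state = "(nat \<Rightarrow> nat set) \<times> (nat \<Rightarrow> nat set)"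

definition states :: "mode \<Rightarrow> nat \<Rightarrow> state set" where
  "states m N = {(st, sr).
     (\<forall>i. i \<le> N + 1 \<longrightarrow>
          st i \<subseteq> {1..N+1} - {i} \<and> card (st i) \<le> 1 \<and>
          sr i \<subseteq> {0..N} - {i} \<and> card (sr i) \<le> 1) \<and>
     (\<forall>i. i > N + 1 \<longrightarrow> st i = {} \<and> sr i = {}) \<and>
     sr 0 = {} \<and> st (N + 1) = {} \<and>
     (m = HD \<longrightarrow> (\<forall>i\<in>{1..N}. card (st i) + card (sr i) \<le> 1))}"

definition active :: "state \<Rightarrow> nat \<Rightarrow> nat \<Rightarrow> bool" where
  "active s i j \<longleftrightarrow> j \<in> fst s i \<and> i \<in> snd s j"

definition cut_value :: "mode \<Rightarrow> nat \<Rightarrow> (nat \<Rightarrow> real) \<Rightarrow> (nat \<Rightarrow> real) \<Rightarrow> (state \<Rightarrow> real) \<Rightarrow> nat set \<Rightarrow> real" where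
  "cut_value m N a b lam \<Omega> =
     (\<Sum>i\<in>\<Omega>. \<Sum>j\<in>{0..N+1} - \<Omega>.
        (\<Sum>s\<in>{s\<in>states m N. active s i j}. lam s) * ell N a b j i)"

definition cuts :: "nat \<Rightarrow> nat set set" where
  "cuts N = {\<Omega>. 0 \<in> \<Omega> \<and> \<Omega> \<subseteq> {0..N}}"

definition prob_vec :: "mode \<Rightarrow> nat \<Rightarrow> (state \<Rightarrow> real) \<Rightarrow> bool" where
  "prob_vec m N lam \<longleftrightarrow> (\<forall>s\<in>states m N. lam s \<ge> 0) \<and> (\<Sum>s\<in>states m N. lam s) = 1"

text \<open>C_cs,iid = max over probability vectors of min over cuts; the max is
  attained (continuous function on a compact simplex), so Sup = max.\<close>
definition Ccs :: "mode \<Rightarrow> nat \<Rightarrow> (nat \<Rightarrow> real) \<Rightarrow> (nat \<Rightarrow> real) \<Rightarrow> real" where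
  "Ccs m N a b = Sup {Min ((cut_value m N a b lam) ` cuts N) | lam. prob_vec m N lam}"

end

theory Submission
  imports Defs
begin

lemma finite_states: "finite (states m N)"
proof -
  let ?F = "{f::nat\<Rightarrow>nat set. \<forall>x. (x \<in> {0..N+1} \<longrightarrow> f x \<in> Pow {0..N+1}) \<and> (x \<notin> {0..N+1} \<longrightarrow> f x = {})}"
  have f: "finite ?F" by (rule finite_set_of_finite_funs) auto
  have "states m N \<subseteq> ?F \<times> ?F" unfolding states_def by fastforce
  thus ?thesis using f by (meson finite_SigmaI finite_subset)
qed

lemma finite_cuts: "finite (cuts N)"
proof -
  have "cuts N \<subseteq> Pow {0..N}" unfolding cuts_def by auto
  thus ?thesis by (meson finite_Pow_iff finite_atLeastAtMost finite_subset)
qed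

lemma cuts_ne: "{0} \<in> cuts N" unfolding cuts_def by auto

definition xx where "xx m N lam p = (\<Sum>s\<in>{s\<in>states m N. active s 0 p}. lam s)"
definition yy where "yy m N lam p = (\<Sum>s\<in>{s\<in>states m N. active s p (N+1)}. lam s)"

lemma cut_formula:
  assumes "\<Omega> \<in> cuts N"
  shows "cut_value m N a b lam \<Omega> =
     (\<Sum>p\<in>{1..N}. if p \<in> \<Omega> then yy m N lam p * b p else xx m N lam p * a p)"
proof -
  let ?act = "\<lambda>i j. (\<Sum>s\<in>{s\<in>states m N. active s i j}. lam s)"
  let ?f = "\<lambda>i. \<Sum>j\<in>{0..N+1} - \<Omega>. ?act i j * ell N a b j i"
  have O0: "0 \<in> \<Omega>" and Osub: "\<Omega> \<subseteq> {0..N}" using assms unfolding cuts_def by auto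
  have finO: "finite \<Omega>" using Osub finite_subset by blast
  have "cut_value m N a b lam \<Omega> = ?f 0 + (\<Sum>i\<in>\<Omega> - {0}. ?f i)"
    unfolding cut_value_def using sum.remove[OF finO O0] by simp
  also have "?f 0 = (\<Sum>j\<in>{0..N+1} - \<Omega>. if j \<in> {1..N} then xx m N lam j * a j else 0)"
    by (rule sum.cong) (auto simp: ell_def xx_def)
  also have "\<dots> = (\<Sum>j\<in>({0..N+1} - \<Omega>) \<inter> {1..N}. xx m N lam j * a j)"
    by (simp add: sum.inter_restrict)
  also have "({0..N+1} - \<Omega>) \<inter> {1..N} = {1..N} \<inter> - \<Omega>" by auto
  also have "(\<Sum>i\<in>\<Omega> - {0}. ?f i) = (\<Sum>i\<in>\<Omega> - {0}. yy m N lam i * b i)"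
  proof (rule sum.cong)
    fix i assume i: "i \<in> \<Omega> - {0}"
    hence i1: "1 \<le> i" "i \<le> N" using Osub by auto
    have "?f i = (\<Sum>j\<in>{0..N+1} - \<Omega>. if j = N+1 then yy m N lam i * b i else 0)"
      by (rule sum.cong) (use i1 in \<open>auto simp: ell_def yy_def\<close>)
    also have "\<dots> = yy m N lam i * b i" using Osub by (subst sum.delta) auto
    finally show "?f i = yy m N lam i * b i" .
  qed simp
  also have "\<Omega> - {0} = {1..N} \<inter> \<Omega>" using Osub by auto
  finally have "cut_value m N a b lam \<Omega> = (\<Sum>j\<in>{1..N} \<inter> - \<Omega>. xx m N lam j * a j) + (\<Sum>i\<in>{1..N} \<inter> \<Omega>. yy m N lam i * b i)" .
  moreover have "(\<Sum>p\<in>{1..N}. if p \<in> \<Omega> then yy m N lam p * b p else xx m N lam p * a p)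
     = (\<Sum>i\<in>{1..N} \<inter> \<Omega>. yy m N lam i * b i) + (\<Sum>j\<in>{1..N} \<inter> - \<Omega>. xx m N lam j * a j)"
    by (subst sum.If_cases) (auto simp: Collect_mem_eq)
  ultimately show ?thesis by simp
qed

lemma sum_le_card1:
  assumes "finite St" "finite P" "\<forall>s\<in>St. lam s \<ge> (0::real)" "\<forall>s\<in>St. card {p\<in>P. Q s p} \<le> 1"
  shows "(\<Sum>p\<in>P. \<Sum>s\<in>{s\<in>St. Q s p}. lam s) \<le> (\<Sum>s\<in>St. lam s)"
proof -
  have "(\<Sum>p\<in>P. \<Sum>s\<in>{s\<in>St. Q s p}. lam s) = (\<Sum>p\<in>P. \<Sum>s\<in>St. if Q s p then lam s else 0)"
    using assms(1) by (simp add: sum.inter_filter)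
  also have "\<dots> = (\<Sum>s\<in>St. \<Sum>p\<in>P. if Q s p then lam s else 0)" by (rule sum.swap)
  also have "\<dots> \<le> (\<Sum>s\<in>St. lam s)"
  proof (rule sum_mono)
    fix s assume s: "s\<in>St"
    have "(\<Sum>p\<in>P. if Q s p then lam s else 0) = (\<Sum>p\<in>{p\<in>P. Q s p}. lam s)"
      by (rule sum.inter_filter[OF assms(2), symmetric])
    also have "\<dots> = real (card {p\<in>P. Q s p}) * lam s" by simp
    also have "\<dots> \<le> 1 * lam s"
      by (rule mult_right_mono) (use assms s in auto)
    finally show "(\<Sum>p\<in>P. if Q s p then lam s else 0) \<le> lam s" by simp
  qed
  finally show ?thesis .
qed

lemma key_ineq:
  assumes "x \<ge> 0" "y \<ge> 0" "A > 0" "B > 0"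
  shows "min (x*A) (y*B) \<le> (x+y) * Cp m (\<lambda>_. A) (\<lambda>_. B) p"
proof (cases m)
  case FD
  show ?thesis
  proof (cases "A \<le> B")
    case True
    have "min (x*A) (y*B) \<le> x*A" by simp
    also have "\<dots> \<le> x*A + y*A" using assms by simp
    finally show ?thesis using True FD by (simp add: Cp_def algebra_simps)
  next
    case False
    have "min (x*A) (y*B) \<le> y*B" by simp
    also have "\<dots> \<le> x*B + y*B" using assms by simp
    finally show ?thesis using False FD by (simp add: Cp_def algebra_simps)
  qed
next
  case HD
  have "(A+B) * min (x*A) (y*B) \<le> B*(x*A) + A*(y*B)"
  proof -
    have "A * min (x*A) (y*B) \<le> A*(y*B)" using assms by (intro mult_left_mono) auto
    moreover have "B * min (x*A) (y*B) \<le> B*(x*A)" using assms by (intro mult_left_mono) auto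
    ultimately show ?thesis by (simp add: distrib_right)
  qed
  also have "\<dots> = (x+y) * (A*B)" by (simp add: algebra_simps)
  finally have "min (x*A) (y*B) \<le> (x+y) * (A*B) / (A+B)" using assms
    by (simp add: field_simps)
  thus ?thesis using HD by (simp add: Cp_def)
qed

lemma Cp_pos: "a p > 0 \<Longrightarrow> b p > 0 \<Longrightarrow> Cp m a b p > 0"
  by (cases m) (auto simp: Cp_def)

lemma xx_nonneg: "prob_vec m N lam \<Longrightarrow> xx m N lam p \<ge> 0"
  unfolding xx_def prob_vec_def by (auto intro: sum_nonneg)
lemma yy_nonneg: "prob_vec m N lam \<Longrightarrow> yy m N lam p \<ge> 0"
  unfolding yy_def prob_vec_def by (auto intro: sum_nonneg)

lemma xx_sum: "prob_vec m N lam \<Longrightarrow> (\<Sum>p\<in>{1..N}. xx m N lam p) \<le> 1"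
proof -
  assume pv: "prob_vec m N lam"
  have "(\<Sum>p\<in>{1..N}. xx m N lam p) \<le> (\<Sum>s\<in>states m N. lam s)"
    unfolding xx_def
  proof (rule sum_le_card1)
    show "\<forall>s\<in>states m N. 0 \<le> lam s" using pv unfolding prob_vec_def by auto
    show "\<forall>s\<in>states m N. card {p \<in> {1..N}. active s 0 p} \<le> 1"
    proof
      fix s assume s: "s \<in> states m N"
      have "\<forall>i. i \<le> N+1 \<longrightarrow> fst s i \<subseteq> {1..N+1}-{i} \<and> card (fst s i) \<le> 1 \<and> snd s i \<subseteq> {0..N}-{i} \<and> card (snd s i) \<le> 1"
        using s unfolding states_def by (cases s) (simp only: mem_Collect_eq case_prod_conv fst_conv snd_conv, blast)
      hence h: "fst s 0 \<subseteq> {1..N+1}-{0} \<and> card (fst s 0) \<le> 1 \<and> snd s 0 \<subseteq> {0..N}-{0} \<and> card (snd s 0) \<le> 1" by (metis le_add2 le_refl zero_le)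
      have "fst s 0 \<subseteq> {1..N+1}" "card (fst s 0) \<le> 1" using h by auto
      moreover have "{p \<in> {1..N}. active s 0 p} \<subseteq> fst s 0" unfolding active_def by auto
      ultimately show "card {p \<in> {1..N}. active s 0 p} \<le> 1"
        by (meson card_mono finite_atLeastAtMost finite_subset le_trans)
    qed
  qed (auto simp: finite_states)
  thus ?thesis using pv unfolding prob_vec_def by simp
qed

lemma yy_sum: "prob_vec m N lam \<Longrightarrow> (\<Sum>p\<in>{1..N}. yy m N lam p) \<le> 1"
proof -
  assume pv: "prob_vec m N lam"
  have "(\<Sum>p\<in>{1..N}. yy m N lam p) \<le> (\<Sum>s\<in>states m N. lam s)"
    unfolding yy_def
  proof (rule sum_le_card1)
    show "\<forall>s\<in>states m N. 0 \<le> lam s" using pv unfolding prob_vec_def by auto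
    show "\<forall>s\<in>states m N. card {p \<in> {1..N}. active s p (N+1)} \<le> 1"
    proof
      fix s assume s: "s \<in> states m N"
      have "\<forall>i. i \<le> N+1 \<longrightarrow> fst s i \<subseteq> {1..N+1}-{i} \<and> card (fst s i) \<le> 1 \<and> snd s i \<subseteq> {0..N}-{i} \<and> card (snd s i) \<le> 1"
        using s unfolding states_def by (cases s) (simp only: mem_Collect_eq case_prod_conv fst_conv snd_conv, blast)
      hence h: "fst s (N+1) \<subseteq> {1..N+1}-{(N+1)} \<and> card (fst s (N+1)) \<le> 1 \<and> snd s (N+1) \<subseteq> {0..N}-{(N+1)} \<and> card (snd s (N+1)) \<le> 1" by (metis le_add2 le_refl zero_le)
      have "snd s (N+1) \<subseteq> {0..N}" "card (snd s (N+1)) \<le> 1" using h by auto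
      moreover have "{p \<in> {1..N}. active s p (N+1)} \<subseteq> snd s (N+1)" unfolding active_def by auto
      ultimately show "card {p \<in> {1..N}. active s p (N+1)} \<le> 1"
        by (meson card_mono finite_atLeastAtMost finite_subset le_trans)
    qed
  qed (auto simp: finite_states)
  thus ?thesis using pv unfolding prob_vec_def by simp
qed

lemma part1_lam:
  assumes vd: "valid_diamond N a b" and pv: "prob_vec m N lam"
  shows "Min (cut_value m N a b lam ` cuts N) \<le> 2 * Max (Cp m a b ` {1..N})"
proof -
  define M where "M = Max (Cp m a b ` {1..N})"
  have N1: "N \<ge> 1" and pos: "\<And>p. p \<in> {1..N} \<Longrightarrow> a p > 0 \<and> b p > 0"
    using vd unfolding valid_diamond_def by auto
  have CpM: "\<And>p. p \<in> {1..N} \<Longrightarrow> Cp m a b p \<le> M" unfolding M_def by (rule Max_ge) auto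
  have M0: "M \<ge> 0" using CpM[of 1] Cp_pos[of a 1 b m] pos[of 1] N1 by auto
  let ?O = "insert 0 {p\<in>{1..N}. yy m N lam p * b p \<le> xx m N lam p * a p}"
  have Oc: "?O \<in> cuts N" unfolding cuts_def by auto
  have "Min (cut_value m N a b lam ` cuts N) \<le> cut_value m N a b lam ?O"
    by (rule Min_le) (use Oc finite_cuts in auto)
  also have "\<dots> = (\<Sum>p\<in>{1..N}. if p \<in> ?O then yy m N lam p * b p else xx m N lam p * a p)"
    by (rule cut_formula[OF Oc])
  also have "\<dots> \<le> (\<Sum>p\<in>{1..N}. (xx m N lam p + yy m N lam p) * M)"
  proof (rule sum_mono)
    fix p assume p: "p \<in> {1..N}"
    have "(if p \<in> ?O then yy m N lam p * b p else xx m N lam p * a p)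
        = min (xx m N lam p * a p) (yy m N lam p * b p)" using p by auto
    also have "\<dots> \<le> (xx m N lam p + yy m N lam p) * Cp m (\<lambda>_. a p) (\<lambda>_. b p) p"
      by (rule key_ineq) (use xx_nonneg[OF pv] yy_nonneg[OF pv] pos[OF p] in auto)
    also have "Cp m (\<lambda>_. a p) (\<lambda>_. b p) p = Cp m a b p" by (cases m) (auto simp: Cp_def)
    also have "(xx m N lam p + yy m N lam p) * Cp m a b p \<le> (xx m N lam p + yy m N lam p) * M"
      by (rule mult_left_mono) (use CpM[OF p] xx_nonneg[OF pv] yy_nonneg[OF pv] in auto)
    finally show "(if p \<in> ?O then yy m N lam p * b p else xx m N lam p * a p)
        \<le> (xx m N lam p + yy m N lam p) * M" .
  qed
  also have "\<dots> = (\<Sum>p\<in>{1..N}. xx m N lam p) * M + (\<Sum>p\<in>{1..N}. yy m N lam p) * M"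
    by (simp add: sum.distrib sum_distrib_right distrib_right)
  also have "\<dots> \<le> 1 * M + 1 * M"
    by (intro add_mono mult_right_mono xx_sum[OF pv] yy_sum[OF pv] M0)
  finally show ?thesis unfolding M_def by simp
qed

definition s0 :: state where "s0 = (\<lambda>_. {}, \<lambda>_. {})"

lemma s0_in: "s0 \<in> states m N" unfolding states_def s0_def by auto

lemma pv_ex: "prob_vec m N (\<lambda>s. if s = s0 then 1 else 0)"
  unfolding prob_vec_def using s0_in[of m N] finite_states[of m N]
  by (simp add: sum.delta')

lemma Ccs_set_bdd:
  assumes "valid_diamond N a b"
  shows "bdd_above {Min ((cut_value m N a b lam) ` cuts N) | lam. prob_vec m N lam}"
  unfolding bdd_above_def using part1_lam[OF assms] by blast

lemma part1:
  assumes "valid_diamond N a b"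
  shows "Ccs m N a b \<le> 2 * Max (Cp m a b ` {1..N})"
  unfolding Ccs_def
proof (rule cSup_least)
  show "{Min ((cut_value m N a b lam) ` cuts N) | lam. prob_vec m N lam} \<noteq> {}"
    using pv_ex by blast
qed (use part1_lam[OF assms] in blast)

definition sA :: state where
  "sA = ((\<lambda>i. if i = 0 then {1} else if i = 2 then {3} else {}),
         (\<lambda>i. if i = 1 then {0} else if i = 3 then {2} else {}))"
definition sB :: state where
  "sB = ((\<lambda>i. if i = 0 then {2} else if i = 1 then {3} else {}),
         (\<lambda>i. if i = 2 then {0} else if i = 3 then {1} else {}))"

lemma sA_in: "sA \<in> states m 2" unfolding states_def sA_def by auto
lemma sB_in: "sB \<in> states m 2" unfolding states_def sB_def by auto
lemma sAB: "sA \<noteq> sB"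
proof
  assume "sA = sB"
  hence "fst sA 0 = fst sB 0" by simp
  thus False by (simp add: sA_def sB_def)
qed

definition lamK :: "real \<Rightarrow> state \<Rightarrow> real" where
  "lamK K s = (if s = sA then 1/K else 0) + (if s = sB then 1 - 1/K else 0)"

lemma lamK_sum: "finite S \<Longrightarrow> sum (lamK K) S = (if sA \<in> S then 1/K else 0) + (if sB \<in> S then 1 - 1/K else 0)"
  unfolding lamK_def by (simp add: sum.distrib sum.delta')

lemma lamK_pv: "K \<ge> 1 \<Longrightarrow> prob_vec m 2 (lamK K)"
  unfolding prob_vec_def
proof
  assume K: "K \<ge> 1"
  show "\<forall>s\<in>states m 2. 0 \<le> lamK K s" using K by (auto simp: lamK_def)
  show "sum (lamK K) (states m 2) = 1"
    by (subst lamK_sum) (auto simp: finite_states sA_in sB_in)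
qed

lemma finS: "finite {s\<in>states m N. P s}" using finite_states by auto

lemma actA: "active sA 0 (Suc 0)" "\<not> active sA 0 2" "\<not> active sA (Suc 0) 3" "active sA 2 3"
  by (simp_all add: active_def sA_def)
lemma actB: "\<not> active sB 0 (Suc 0)" "active sB 0 2" "active sB (Suc 0) 3" "\<not> active sB 2 3"
  by (simp_all add: active_def sB_def)

lemma xx1: "xx m 2 (lamK K) (Suc 0) = 1/K"
  unfolding xx_def by (subst lamK_sum[OF finS]) (simp add: sA_in sB_in actA actB)
lemma xx2: "xx m 2 (lamK K) 2 = 1 - 1/K"
  unfolding xx_def by (subst lamK_sum[OF finS]) (simp add: sA_in sB_in actA actB)
lemma yy1: "yy m 2 (lamK K) (Suc 0) = 1 - 1/K"
  unfolding yy_def by (subst lamK_sum[OF finS]) (simp add: sA_in sB_in actA actB)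
lemma yy2: "yy m 2 (lamK K) 2 = 1/K"
  unfolding yy_def by (subst lamK_sum[OF finS]) (simp add: sA_in sB_in actA actB)

lemma sum12: "(\<Sum>p\<in>{1..2::nat}. f p) = f 1 + f (2::nat)"
proof -
  have e: "{1..2::nat} = {1,2}" by auto
  show ?thesis unfolding e by simp
qed

lemma part2:
  assumes "\<epsilon> > 0"
  shows "\<exists>a b. valid_diamond 2 a b \<and> Max (Cp m a b ` {1..2}) \<le> (1/2 + \<epsilon>) * Ccs m 2 a b"
proof -
  define K :: real where "K = real (nat \<lceil>1/\<epsilon>\<rceil>) + 1"
  define a :: "nat \<Rightarrow> real" where "a = (\<lambda>p. if p = 1 then K else 1)"
  define b :: "nat \<Rightarrow> real" where "b = (\<lambda>p. if p = 2 then K else 1)"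
  have K1: "K \<ge> 1" unfolding K_def by simp
  have Kge: "K \<ge> 1/\<epsilon> + 1" unfolding K_def by linarith
  have KQ: "K \<in> \<rat>" unfolding K_def by simp
  have vd: "valid_diamond 2 a b"
    unfolding valid_diamond_def a_def b_def using K1 KQ by auto
  have Cp1: "\<And>p. p \<in> {1..2} \<Longrightarrow> Cp m a b p \<le> 1"
  proof -
    fix p :: nat assume "p \<in> {1..2}"
    have ap: "a p \<ge> 1" "b p \<ge> 1" "min (a p) (b p) = 1" using K1 unfolding a_def b_def by auto
    show "Cp m a b p \<le> 1"
    proof (cases m)
      case FD thus ?thesis using ap by (simp add: Cp_def)
    next
      case HD
      have "a p * b p / (a p + b p) \<le> 1" using ap
        by (simp add: divide_le_eq_1) (smt (verit) min_def mult_cancel_left1 mult_cancel_right1)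
      thus ?thesis using HD by (simp add: Cp_def)
    qed
  qed
  have MaxC: "Max (Cp m a b ` {1..2}) \<le> 1"
    by (rule Max.boundedI) (use Cp1 in auto)
  have cutge: "\<And>\<Omega>. \<Omega> \<in> cuts 2 \<Longrightarrow> cut_value m 2 a b (lamK K) \<Omega> \<ge> 2 - 2/K"
  proof -
    fix \<Omega> assume O: "\<Omega> \<in> cuts 2"
    have e: "{1..2::nat} = {1,2}" by auto
    have K0: "K > 0" using K1 by simp
    have t1: "(if 1 \<in> \<Omega> then yy m 2 (lamK K) 1 * b 1 else xx m 2 (lamK K) 1 * a 1) \<ge> 1 - 1/K"
      using K0 by (simp add: xx1 yy1 a_def b_def)
    have t2: "(if 2 \<in> \<Omega> then yy m 2 (lamK K) 2 * b 2 else xx m 2 (lamK K) 2 * a 2) \<ge> 1 - 1/K"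
      using K0 by (simp add: xx2 yy2 a_def b_def)
    show "cut_value m 2 a b (lamK K) \<Omega> \<ge> 2 - 2/K"
      unfolding cut_formula[OF O] sum12 using t1 t2 by linarith
  qed
  have Minge: "Min (cut_value m 2 a b (lamK K) ` cuts 2) \<ge> 2 - 2/K"
    by (rule Min.boundedI) (use finite_cuts cuts_ne cutge in auto)
  have Ccsge: "Ccs m 2 a b \<ge> 2 - 2/K"
  proof -
    have "Min (cut_value m 2 a b (lamK K) ` cuts 2) \<le> Ccs m 2 a b"
      unfolding Ccs_def
      by (rule cSup_upper) (use lamK_pv[OF K1] Ccs_set_bdd[OF vd] in auto)
    thus ?thesis using Minge by simp
  qed
  have key: "1 \<le> (1/2 + \<epsilon>) * (2 - 2/K)"
  proof -
    have K0: "K > 0" using K1 by simp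
    have "\<epsilon> * K \<ge> \<epsilon> * (1/\<epsilon> + 1)" using Kge assms by (intro mult_left_mono) auto
    hence eK: "\<epsilon> * K \<ge> 1 + \<epsilon>" using assms by (simp add: distrib_left)
    have "(1/2 + \<epsilon>) * (2 - 2/K) = 1 + 2*\<epsilon> - (1 + 2*\<epsilon>)/K" using K0 by (simp add: field_simps)
    moreover have "(1 + 2*\<epsilon>)/K \<le> 2*\<epsilon>" using K0 eK assms by (simp add: divide_le_eq)
    ultimately show ?thesis by simp
  qed
  have "(1/2 + \<epsilon>) * (2 - 2/K) \<le> (1/2 + \<epsilon>) * Ccs m 2 a b"
    by (rule mult_left_mono) (use Ccsge assms in auto)
  hence "Max (Cp m a b ` {1..2}) \<le> (1/2 + \<epsilon>) * Ccs m 2 a b" using MaxC key by linarith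
  thus ?thesis using vd by blast
qed

theorem lemma5:
  shows "\<forall>m :: mode.
     (\<forall>N a b. valid_diamond N a b \<longrightarrow>
        Max (Cp m a b ` {1..N}) \<ge> 1/2 * Ccs m N a b) \<and>
     (\<forall>\<epsilon>::real. \<epsilon> > 0 \<longrightarrow>
        (\<exists>a b. valid_diamond 2 a b \<and>
           Max (Cp m a b ` {1..2}) \<le> (1/2 + \<epsilon>) * Ccs m 2 a b))"
proof (intro allI conjI impI)
  fix m N a b assume "valid_diamond N a b"
  from part1[OF this, of m] show "Max (Cp m a b ` {1..N}) \<ge> 1/2 * Ccs m N a b" by simp
next
  fix m and \<epsilon> :: real assume "\<epsilon> > 0"
  from part2[OF this, of m] show "\<exists>a b. valid_diamond 2 a b \<and>
           Max (Cp m a b ` {1..2}) \<le> (1/2 + \<epsilon>) * Ccs m 2 a b" .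
qed

end
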